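(* Let $M$ be a free $\mathbb{Z}$-module of rank $2$ with basis $\{a_1, b_1\}$ and skew-symmetric pairing with $\langle a_1, b_1 \rangle = -1$. Let $c_1, c_2, c_3 \in M$ with $c_1 \equiv a_1 + b_1$, $c_2 \equiv b_1$ and $c_3 \equiv a_1 \pmod{2M}$, and let $n \geq 1$. Then the closed subgroup of $\mathrm{Sp}(M \otimes \mathbb{Z}_2)$ topologically generated by $T_{c_1}^{2^n}, T_{c_2}^{2^n}, T_{c_3}^{2^n}$ coincides with $\Gamma(2^{n})$.
   Context: For $c \in M$, $T_c$ is the transvection $v \mapsto v + \langle v, c\rangle c$ on $M\otimes\mathbb{Z}_2$. $\Gamma(N) = \{\sigma \in \mathrm{Sp}(M\otimes\mathbb{Z}_2) : \sigma \equiv 1 \pmod N\}$. *)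

theory Defs
  imports "HOL-Analysis.Finite_Cartesian_Product" "HOL-Algebra.Group"
begin

definition a1 :: "int ^ 2" where "a1 = axis 1 1"
definition b1 :: "int ^ 2" where "b1 = axis 2 1"

definition pairing :: "int ^ 2 \<Rightarrow> int ^ 2 \<Rightarrow> int" where
  "pairing u v = u $ 2 * v $ 1 - u $ 1 * v $ 2"

definition transv :: "int ^ 2 \<Rightarrow> int ^ 2 \<Rightarrow> int ^ 2" where
  "transv c v = v + pairing v c *s c"

definition transv_mat :: "int ^ 2 \<Rightarrow> int ^ 2 ^ 2" where
  "transv_mat c = (\<chi> i j. transv c (axis j 1) $ i)"

definition matmod :: "nat \<Rightarrow> int ^ 2 ^ 2 \<Rightarrow> int ^ 2 ^ 2" where
  "matmod k X = (\<chi> i j. X $ i $ j mod 2 ^ k)"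

text \<open>2x2 matrices over Z_2 (= End(M \<otimes> Z_2)), represented as the inverse limit of
  matrices over Z/2^k: compatible sequences of reduced integer matrices.\<close>
definition compatible :: "(nat \<Rightarrow> int ^ 2 ^ 2) \<Rightarrow> bool" where
  "compatible A \<longleftrightarrow> (\<forall>k. matmod k (A k) = A k \<and> matmod k (A (Suc k)) = A k)"

definition symplectic :: "(nat \<Rightarrow> int ^ 2 ^ 2) \<Rightarrow> bool" where
  "symplectic A \<longleftrightarrow> (\<forall>k u v. pairing (A k *v u) (A k *v v) mod 2 ^ k = pairing u v mod 2 ^ k)"

definition Sp2 :: "(nat \<Rightarrow> int ^ 2 ^ 2) monoid" where
  "Sp2 = \<lparr> carrier = {A. compatible A \<and> symplectic A},
           mult = (\<lambda>A B. (\<lambda>k. matmod k (A k ** B k))),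
           one = (\<lambda>k. matmod k (mat 1)) \<rparr>"

definition embed :: "int ^ 2 ^ 2 \<Rightarrow> (nat \<Rightarrow> int ^ 2 ^ 2)" where
  "embed X = (\<lambda>k. matmod k X)"

definition Gamma2pow :: "nat \<Rightarrow> (nat \<Rightarrow> int ^ 2 ^ 2) set" where
  "Gamma2pow n = {A \<in> carrier Sp2. A n = matmod n (mat 1)}"

text \<open>Closed sets for the profinite (2-adic) topology: closure of C is the set of x
  agreeing with some element of C modulo every 2^k.\<close>
definition closed_Sp :: "(nat \<Rightarrow> int ^ 2 ^ 2) set \<Rightarrow> bool" where
  "closed_Sp C \<longleftrightarrow> C \<subseteq> carrier Sp2 \<and>
     (\<forall>x \<in> carrier Sp2. (\<forall>k. \<exists>y \<in> C. y k = x k) \<longrightarrow> x \<in> C)"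

definition topgen :: "(nat \<Rightarrow> int ^ 2 ^ 2) set \<Rightarrow> (nat \<Rightarrow> int ^ 2 ^ 2) set" where
  "topgen S = \<Inter> {H. subgroup H Sp2 \<and> closed_Sp H \<and> S \<subseteq> H}"

end

theory Submission imports Defs "HOL-Analysis.Cartesian_Space"
begin

lemma mm_nth: "((X::int^2^2) ** Y) $ i $ j = X$i$1 * Y$1$j + X$i$2 * Y$2$j"
  by (simp add: matrix_matrix_mult_def sum_2)

lemma mat1_nth: "(mat 1 :: int^2^2) $ i $ j = (if i = j then 1 else 0)"
  by (simp add: mat_def)

lemma mat_eqI: "(X::int^2^2)$1$1 = Y$1$1 \<Longrightarrow> X$1$2 = Y$1$2 \<Longrightarrow> X$2$1 = Y$2$1 \<Longrightarrow> X$2$2 = Y$2$2 \<Longrightarrow> X = Y"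
  by (simp add: vec_eq_iff forall_2)

definition det2 :: "int^2^2 \<Rightarrow> int" where
  "det2 X = X$1$1 * X$2$2 - X$1$2 * X$2$1"

lemma matmod_nth: "matmod k X $ i $ j = X$i$j mod 2^k"
  by (simp add: matmod_def)

lemma matmod_mult_left: "matmod k (matmod k X ** Y) = matmod k (X ** Y)"
  unfolding matmod_def vec_eq_iff mm_nth
  by (auto intro!: mod_add_cong mod_mult_cong)

lemma matmod_mult_right: "matmod k (X ** matmod k Y) = matmod k (X ** Y)"
  unfolding matmod_def vec_eq_iff mm_nth
  by (auto intro!: mod_add_cong mod_mult_cong)

lemma matmod_matmod: "k \<le> m \<Longrightarrow> matmod k (matmod m X) = matmod k X"
  by (simp add: matmod_def vec_eq_iff mod_mod_cancel le_imp_power_dvd)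

lemma det2_mult: "det2 (X ** Y) = det2 X * det2 Y"
  by (simp add: det2_def mm_nth algebra_simps)

lemma det2_matmod: "det2 (matmod k X) mod 2^k = det2 X mod 2^k"
  unfolding det2_def matmod_nth
  by (auto intro!: mod_diff_cong mod_mult_cong)

lemma pairing_mult: "pairing (X *v u) (X *v v) = det2 X * pairing u v"
  by (simp add: pairing_def matrix_vector_mult_def sum_2 det2_def algebra_simps)

lemma symplectic_iff: "symplectic A \<longleftrightarrow> (\<forall>k. det2 (A k) mod 2^k = 1 mod 2^k)"
proof
  assume "symplectic A"
  show "\<forall>k. det2 (A k) mod 2^k = 1 mod 2^k"
  proof
    fix k
    have "pairing (A k *v axis 1 1) (A k *v axis 2 1) mod 2^k = pairing (axis 1 1) (axis 2 1) mod 2^k"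
      using \<open>symplectic A\<close> unfolding symplectic_def by blast
    hence "(- det2 (A k)) mod 2^k = (-1) mod 2^k"
      by (simp add: pairing_def axis_def matrix_vector_mult_def sum_2 det2_def mult.commute)
    thus "det2 (A k) mod 2^k = 1 mod 2^k"
      using mod_minus_cong[of "- det2 (A k)" "2^k" "-1"] by simp
  qed
next
  assume H: "\<forall>k. det2 (A k) mod 2^k = 1 mod 2^k"
  show "symplectic A" unfolding symplectic_def
  proof (intro allI)
    fix k u v
    have "pairing (A k *v u) (A k *v v) mod 2^k = (det2 (A k) mod 2^k * pairing u v) mod 2^k"
      by (simp add: pairing_mult mod_mult_left_eq)
    also have "\<dots> = pairing u v mod 2^k" using H by (simp add: mod_mult_left_eq)
    finally show "pairing (A k *v u) (A k *v v) mod 2 ^ k = pairing u v mod 2 ^ k" .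
  qed
qed

definition adj :: "int^2^2 \<Rightarrow> int^2^2" where
  "adj X = (\<chi> i j. if i = 1 then (if j = 1 then X$2$2 else - X$1$2)
                   else (if j = 1 then - X$2$1 else X$1$1))"

lemma adj_nth: "adj X $1$1 = X$2$2" "adj X $1$2 = - X$1$2" "adj X $2$1 = - X$2$1" "adj X $2$2 = X$1$1"
  by (simp_all add: adj_def)

lemma adj_mult: "adj X ** X = mat (det2 X)" "X ** adj X = mat (det2 X)"
  by (rule mat_eqI; simp add: mm_nth adj_nth mat_def det2_def algebra_simps)+

lemma det2_adj: "det2 (adj X) = det2 X"
  by (simp add: det2_def adj_nth algebra_simps)

lemma matmod_adj: "matmod k (adj (matmod k X)) = matmod k (adj X)"
  by (rule mat_eqI; simp add: matmod_nth adj_nth mod_minus_eq)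

lemma compatible_le: assumes "k \<le> l" "compatible A" shows "matmod k (A l) = A k"
  using assms
proof (induction l rule: dec_induct)
  case base then show ?case by (simp add: compatible_def)
next
  case (step l)
  have "matmod k (A (Suc l)) = matmod k (matmod l (A (Suc l)))"
    using step by (simp add: matmod_matmod)
  also have "\<dots> = matmod k (A l)" using step.prems by (simp add: compatible_def)
  finally show ?case using step by simp
qed

lemma carrier_Sp2: "A \<in> carrier Sp2 \<longleftrightarrow> compatible A \<and> symplectic A"
  by (simp add: Sp2_def)
lemma mult_Sp2: "A \<otimes>\<^bsub>Sp2\<^esub> B = (\<lambda>k. matmod k (A k ** B k))"
  by (simp add: Sp2_def)
lemma one_Sp2: "\<one>\<^bsub>Sp2\<^esub> = (\<lambda>k. matmod k (mat 1))"
  by (simp add: Sp2_def)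

lemma matmod_idem: "matmod k (matmod k X) = matmod k X"
  by (simp add: matmod_matmod)

lemma matmod_mat: "d mod 2^k = e mod 2^k \<Longrightarrow> matmod k (mat d) = matmod k (mat e)"
  by (simp add: matmod_def mat_def vec_eq_iff)

lemma det2_mat1: "det2 (mat 1) = 1"
  by (simp add: det2_def mat_def)

lemma matmod_mult_both: "matmod k (matmod k X ** matmod k Y) = matmod k (X ** Y)"
  by (simp add: matmod_mult_left matmod_mult_right)

lemma group_Sp2: "group Sp2"
proof (rule groupI)
  fix x y assume x: "x \<in> carrier Sp2" and y: "y \<in> carrier Sp2"
  hence cx: "compatible x" "\<forall>k. det2 (x k) mod 2^k = 1 mod 2^k"
    and cy: "compatible y" "\<forall>k. det2 (y k) mod 2^k = 1 mod 2^k"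
    by (auto simp: carrier_Sp2 symplectic_iff)
  have "compatible (\<lambda>k. matmod k (x k ** y k))"
    unfolding compatible_def
  proof (intro allI conjI)
    fix k
    show "matmod k (matmod k (x k ** y k)) = matmod k (x k ** y k)" by (rule matmod_idem)
    have "matmod k (matmod (Suc k) (x (Suc k) ** y (Suc k))) = matmod k (x (Suc k) ** y (Suc k))"
      by (simp add: matmod_matmod)
    also have "\<dots> = matmod k (matmod k (x (Suc k)) ** matmod k (y (Suc k)))"
      by (simp add: matmod_mult_both)
    also have "\<dots> = matmod k (x k ** y k)" using cx(1) cy(1) by (simp add: compatible_def)
    finally show "matmod k (matmod (Suc k) (x (Suc k) ** y (Suc k))) = matmod k (x k ** y k)" .
  qed
  moreover have "symplectic (\<lambda>k. matmod k (x k ** y k))"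
    unfolding symplectic_iff
  proof
    fix k
    have "det2 (matmod k (x k ** y k)) mod 2^k = (det2 (x k) * det2 (y k)) mod 2^k"
      by (simp add: det2_matmod det2_mult)
    also have "\<dots> = (1 * 1) mod 2^k"
      by (rule mod_mult_cong) (use cx(2) cy(2) in auto)
    finally show "det2 (matmod k (x k ** y k)) mod 2^k = 1 mod 2^k" by simp
  qed
  ultimately show "x \<otimes>\<^bsub>Sp2\<^esub> y \<in> carrier Sp2"
    by (simp add: carrier_Sp2 mult_Sp2)
next
  show "\<one>\<^bsub>Sp2\<^esub> \<in> carrier Sp2"
    by (simp add: carrier_Sp2 one_Sp2 compatible_def symplectic_iff matmod_matmod det2_matmod det2_mat1)
next
  fix x y z assume "x \<in> carrier Sp2" "y \<in> carrier Sp2" "z \<in> carrier Sp2"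
  show "x \<otimes>\<^bsub>Sp2\<^esub> y \<otimes>\<^bsub>Sp2\<^esub> z = x \<otimes>\<^bsub>Sp2\<^esub> (y \<otimes>\<^bsub>Sp2\<^esub> z)"
    by (simp add: mult_Sp2 matmod_mult_left matmod_mult_right matrix_mul_assoc)
next
  fix x assume "x \<in> carrier Sp2"
  hence "compatible x" by (simp add: carrier_Sp2)
  thus "\<one>\<^bsub>Sp2\<^esub> \<otimes>\<^bsub>Sp2\<^esub> x = x"
    by (simp add: mult_Sp2 one_Sp2 matmod_mult_left compatible_def)
next
  fix x assume x: "x \<in> carrier Sp2"
  hence cx: "compatible x" "\<forall>k. det2 (x k) mod 2^k = 1 mod 2^k"
    by (auto simp: carrier_Sp2 symplectic_iff)
  define y where "y = (\<lambda>k. matmod k (adj (x k)))"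
  have "compatible y"
    unfolding compatible_def y_def
  proof (intro allI conjI)
    fix k
    show "matmod k (matmod k (adj (x k))) = matmod k (adj (x k))" by (rule matmod_idem)
    have "matmod k (matmod (Suc k) (adj (x (Suc k)))) = matmod k (adj (x (Suc k)))"
      by (simp add: matmod_matmod)
    also have "\<dots> = matmod k (adj (matmod k (x (Suc k))))"
      by (simp add: matmod_adj)
    also have "\<dots> = matmod k (adj (x k))" using cx(1) by (simp add: compatible_def)
    finally show "matmod k (matmod (Suc k) (adj (x (Suc k)))) = matmod k (adj (x k))" .
  qed
  moreover have "symplectic y"
    unfolding symplectic_iff y_def
    using cx(2) by (simp add: det2_matmod det2_adj)
  moreover have "y \<otimes>\<^bsub>Sp2\<^esub> x = \<one>\<^bsub>Sp2\<^esub>"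
  proof -
    have "matmod k (y k ** x k) = matmod k (mat 1)" for k
    proof -
      have "matmod k (y k ** x k) = matmod k (adj (x k) ** x k)"
        unfolding y_def by (rule matmod_mult_left)
      also have "\<dots> = matmod k (mat (det2 (x k)))" by (simp add: adj_mult)
      also have "\<dots> = matmod k (mat 1)" using cx(2) by (intro matmod_mat) auto
      finally show ?thesis .
    qed
    thus ?thesis by (simp add: mult_Sp2 one_Sp2)
  qed
  ultimately show "\<exists>y\<in>carrier Sp2. y \<otimes>\<^bsub>Sp2\<^esub> x = \<one>\<^bsub>Sp2\<^esub>"
    by (auto simp: carrier_Sp2)
qed

lemma inv_Sp2: assumes "x \<in> carrier Sp2"
  shows "inv\<^bsub>Sp2\<^esub> x = (\<lambda>k. matmod k (adj (x k)))"
proof -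
  from assms have cx: "compatible x" "\<forall>k. det2 (x k) mod 2^k = 1 mod 2^k"
    by (auto simp: carrier_Sp2 symplectic_iff)
  obtain y where y: "y \<in> carrier Sp2" "y \<otimes>\<^bsub>Sp2\<^esub> x = \<one>\<^bsub>Sp2\<^esub>"
    using group.l_inv_ex[OF group_Sp2 assms] by blast
  have "inv\<^bsub>Sp2\<^esub> x = y" using group.inv_equality[OF group_Sp2 y(2) assms y(1)] .
  have "y k = matmod k (adj (x k))" for k
  proof -
    have yk: "matmod k (y k ** x k) = matmod k (mat 1)"
      using y(2) by (simp add: mult_Sp2 one_Sp2 fun_eq_iff)
    have "y k = matmod k (y k ** mat (det2 (x k)))"
    proof -
      have "matmod k (y k ** mat (det2 (x k))) = matmod k (y k ** matmod k (mat (det2 (x k))))"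
        by (simp add: matmod_mult_right)
      also have "\<dots> = matmod k (y k ** matmod k (mat 1))"
        by (simp only: matmod_mat[OF cx(2)[rule_format]])
      also have "\<dots> = matmod k (y k)" by (simp add: matmod_mult_right)
      also have "\<dots> = y k" using y(1) by (simp add: carrier_Sp2 compatible_def)
      finally show ?thesis by simp
    qed
    also have "\<dots> = matmod k ((y k ** x k) ** adj (x k))"
      by (simp add: adj_mult(2) matrix_mul_assoc[symmetric])
    also have "\<dots> = matmod k (matmod k (y k ** x k) ** adj (x k))"
      by (simp add: matmod_mult_left)
    also have "\<dots> = matmod k (adj (x k))" using yk by (simp add: matmod_mult_left)
    finally show ?thesis .
  qed
  thus ?thesis using \<open>inv\<^bsub>Sp2\<^esub> x = y\<close> by auto
qed


lemma matmod_one: "n \<ge> 1 \<Longrightarrow> matmod n (mat 1) = mat 1"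
  by (simp add: matmod_def mat_def vec_eq_iff)

lemma adj_one: "adj (mat 1) = mat 1"
  by (rule mat_eqI) (simp_all add: adj_nth mat_def)

lemma Gamma_subgroup: "subgroup (Gamma2pow n) Sp2"
proof (rule group.subgroupI[OF group_Sp2])
  show "Gamma2pow n \<subseteq> carrier Sp2" by (auto simp: Gamma2pow_def)
  have "\<one>\<^bsub>Sp2\<^esub> \<in> carrier Sp2" by (rule monoid.one_closed[OF group.is_monoid[OF group_Sp2]])
  hence "\<one>\<^bsub>Sp2\<^esub> \<in> Gamma2pow n" by (simp add: Gamma2pow_def one_Sp2)
  thus "Gamma2pow n \<noteq> {}" by blast
next
  fix a assume a: "a \<in> Gamma2pow n"
  hence ac: "a \<in> carrier Sp2" and an: "a n = matmod n (mat 1)" by (auto simp: Gamma2pow_def)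
  have "inv\<^bsub>Sp2\<^esub> a \<in> carrier Sp2" using group.inv_closed[OF group_Sp2 ac] .
  moreover have "(inv\<^bsub>Sp2\<^esub> a) n = matmod n (mat 1)"
    using an by (simp add: inv_Sp2[OF ac] matmod_adj adj_one)
  ultimately show "inv\<^bsub>Sp2\<^esub> a \<in> Gamma2pow n" by (simp add: Gamma2pow_def)
next
  fix a b assume a: "a \<in> Gamma2pow n" and b: "b \<in> Gamma2pow n"
  hence "a \<otimes>\<^bsub>Sp2\<^esub> b \<in> carrier Sp2"
    using monoid.m_closed[OF group.is_monoid[OF group_Sp2]] by (auto simp: Gamma2pow_def)
  moreover have "(a \<otimes>\<^bsub>Sp2\<^esub> b) n = matmod n (mat 1)"
    using a b by (simp add: Gamma2pow_def mult_Sp2 matmod_mult_both)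
  ultimately show "a \<otimes>\<^bsub>Sp2\<^esub> b \<in> Gamma2pow n" by (simp add: Gamma2pow_def)
qed

lemma Gamma_closed: "closed_Sp (Gamma2pow n)"
  unfolding closed_Sp_def
proof (intro conjI ballI impI)
  show "Gamma2pow n \<subseteq> carrier Sp2" by (auto simp: Gamma2pow_def)
  fix x assume x: "x \<in> carrier Sp2" and H: "\<forall>k. \<exists>y\<in>Gamma2pow n. y k = x k"
  from H obtain y where "y \<in> Gamma2pow n" "y n = x n" by blast
  thus "x \<in> Gamma2pow n" using x by (simp add: Gamma2pow_def)
qed

lemma embed_mult: "embed X \<otimes>\<^bsub>Sp2\<^esub> embed Y = embed (X ** Y)"
  by (simp add: embed_def mult_Sp2 matmod_mult_both)

lemma embed_one: "embed (mat 1) = \<one>\<^bsub>Sp2\<^esub>"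
  by (simp add: embed_def one_Sp2)

lemma embed_carrier: "det2 X = 1 \<Longrightarrow> embed X \<in> carrier Sp2"
  by (simp add: embed_def carrier_Sp2 compatible_def symplectic_iff matmod_matmod det2_matmod)

primrec mpow :: "int^2^2 \<Rightarrow> nat \<Rightarrow> int^2^2" where
  "mpow X 0 = mat 1"
| "mpow X (Suc m) = mpow X m ** X"

lemma embed_pow: "embed X [^]\<^bsub>Sp2\<^esub> m = embed (mpow X m)"
  by (induction m) (simp_all add: embed_one embed_mult)

lemma det2_mpow: "det2 (mpow X m) = det2 X ^ m"
  by (induction m) (simp_all add: det2_mat1 det2_mult)

lemma mpow_add: "mpow X (a + b) = mpow X a ** mpow X b"
  by (induction b) (simp_all add: matrix_mul_assoc)

lemma mpow_mult: "mpow X (a * b) = mpow (mpow X a) b"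
proof (induction b)
  case 0 then show ?case by simp
next
  case (Suc b)
  have "mpow X (a * Suc b) = mpow X (a * b + a)" by (simp add: add.commute)
  also have "\<dots> = mpow X (a * b) ** mpow X a" by (rule mpow_add)
  also have "\<dots> = mpow (mpow X a) (Suc b)" using Suc.IH by simp
  finally show ?case .
qed

definition Nm :: "int^2 \<Rightarrow> int^2^2" where
  "Nm c = (\<chi> i j. c$i * pairing (axis j 1) c)"

lemma Nm_nth: "Nm c $1$1 = - c$1 * c$2" "Nm c $1$2 = c$1 * c$1"
   "Nm c $2$1 = - c$2 * c$2" "Nm c $2$2 = c$2 * c$1"
  by (simp_all add: Nm_def pairing_def axis_def)

definition smat :: "int \<Rightarrow> int^2^2 \<Rightarrow> int^2^2" where
  "smat a M = (\<chi> i j. a * M$i$j)"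

lemma smat_nth: "smat a M $i$j = a * M$i$j"
  by (simp add: smat_def)

lemma transv_eq: "transv_mat c = mat 1 + Nm c"
  by (rule mat_eqI) (simp_all add: transv_mat_def transv_def Nm_nth mat_def pairing_def axis_def algebra_simps)

lemma mpow_transv: "mpow (transv_mat c) m = mat 1 + smat (int m) (Nm c)"
proof (induction m)
  case 0 show ?case by (simp add: smat_def vec_eq_iff)
next
  case (Suc m)
  have "mpow (transv_mat c) (Suc m) = (mat 1 + smat (int m) (Nm c)) ** (mat 1 + Nm c)"
    by (simp only: mpow.simps Suc.IH) (simp add: transv_eq)
  also have "\<dots> = mat 1 + smat (int (Suc m)) (Nm c)"
    by (rule mat_eqI) (simp_all add: mm_nth smat_nth Nm_nth mat_def algebra_simps)
  finally show ?case .
qed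

lemma det2_transv: "det2 (transv_mat c) = 1"
  by (simp add: transv_eq det2_def Nm_nth mat_def algebra_simps)

lemma S_Gamma: assumes "n \<ge> 1"
  shows "embed (transv_mat c) [^]\<^bsub>Sp2\<^esub> (2 ^ n :: nat) \<in> Gamma2pow n"
proof -
  have e: "embed (transv_mat c) [^]\<^bsub>Sp2\<^esub> (2 ^ n :: nat) = embed (mat 1 + smat (2^n) (Nm c))"
    by (simp add: embed_pow mpow_transv)
  have "embed (mpow (transv_mat c) (2^n)) \<in> carrier Sp2"
    by (rule embed_carrier) (simp add: det2_mpow det2_transv)
  hence "embed (mat 1 + smat (2^n) (Nm c)) \<in> carrier Sp2"
    unfolding mpow_transv by simp
  moreover have "matmod n (mat 1 + smat (2^n) (Nm c)) = matmod n (mat 1)"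
    by (simp add: matmod_def vec_eq_iff smat_nth)
  ultimately show ?thesis unfolding e by (simp add: Gamma2pow_def embed_def)
qed


definition divm :: "int \<Rightarrow> int^2^2 \<Rightarrow> bool" where
  "divm d M \<longleftrightarrow> (\<forall>i j. d dvd M$i$j)"

lemma matmod_eq_iff: "matmod k X = matmod k Y \<longleftrightarrow> divm (2^k) (X - Y)"
  by (simp add: matmod_def vec_eq_iff divm_def mod_eq_dvd_iff)

lemma divm_add: "divm d M \<Longrightarrow> divm d N \<Longrightarrow> divm d (M + N)"
  by (simp add: divm_def)

lemma divm_zero: "divm d 0"
  by (simp add: divm_def)

lemma divm_mult_left: "divm d M \<Longrightarrow> divm d (P ** M)"
  by (simp add: divm_def mm_nth)

lemma divm_mult_right: "divm d M \<Longrightarrow> divm d (M ** P)"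
  by (simp add: divm_def mm_nth)

lemma divm_smat: "divm d M \<Longrightarrow> divm (q * d) (smat q M)"
  by (simp add: divm_def smat_nth mult_dvd_mono)

lemma divm_swap: "divm d (X - Y) \<Longrightarrow> divm d (Y - X)"
  unfolding divm_def by (metis dvd_diff_commute vector_minus_component)

lemma prod_level:
  fixes X Y A B :: "int^2^2"
  assumes q: "even q" and dx: "divm (2*q) (X - (mat 1 + smat q A))"
    and dy: "divm (2*q) (Y - (mat 1 + smat q B))"
  shows "divm (2*q) (X ** Y - (mat 1 + smat q (A + B)))"
proof -
  define D where "D = X - (mat 1 + smat q A)"
  define E where "E = Y - (mat 1 + smat q B)"
  have eq: "X ** Y - (mat 1 + smat q (A + B)) =
     D + E + smat (q*q) (A ** B) + smat q A ** E + D ** smat q B + D ** E"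
    unfolding D_def E_def
    by (rule mat_eqI) (simp_all add: mm_nth smat_nth mat_def algebra_simps)
  obtain r where r: "q = 2 * r" using q by blast
  have "divm (2*q) (smat (q*q) (A ** B))"
    unfolding divm_def smat_nth r by (simp add: mult.assoc)
  moreover have "divm (2*q) D" "divm (2*q) E" using dx dy D_def E_def by auto
  ultimately show ?thesis unfolding eq
    by (intro divm_add divm_mult_left divm_mult_right)
qed

inductive_set Rg :: "(int^2^2) set \<Rightarrow> (int^2^2) set" for G :: "(int^2^2) set" where
  Rg_one: "mat 1 \<in> Rg G"
| Rg_step: "W \<in> Rg G \<Longrightarrow> g \<in> G \<Longrightarrow> W ** g \<in> Rg G"

lemma Rg_mult: assumes "V \<in> Rg G" "W \<in> Rg G" shows "W ** V \<in> Rg G"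
  using assms(1)
proof (induction V rule: Rg.induct)
  case Rg_one then show ?case using assms(2) by simp
next
  case (Rg_step V g) then show ?case by (metis Rg.Rg_step matrix_mul_assoc)
qed

lemma Rg_pow: "g \<in> G \<Longrightarrow> mpow g m \<in> Rg G"
  by (induction m) (auto intro: Rg.intros)

lemma smat_smat: "smat (a * b) M = smat a (smat b M)"
  by (simp add: smat_def vec_eq_iff)

lemma diff_add_diff3: "(a::'a::ab_group_add) - b + (b - c) = a - c"
  by simp

lemma par_test:
  fixes c1 c2 c3 :: "int^2" and Z :: "int^2^2" and e1 e2 e3 :: nat
  assumes p1: "odd (c1$1)" "odd (c1$2)" and p2: "even (c2$1)" "odd (c2$2)"
    and p3: "odd (c3$1)" "even (c3$2)"
    and tr: "even (Z$1$1 + Z$2$2)"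
    and e: "e1 = (if even (Z$1$1) then 0 else 1)" "e2 = (if even (Z$2$1 - Z$1$1) then 0 else 1)"
       "e3 = (if even (Z$1$2 - Z$1$1) then 0 else 1)"
  shows "divm 2 (smat (int e3) (Nm c3) + smat (int e2) (Nm c2) + smat (int e1) (Nm c1) - Z)"
proof -
  have o: "odd (int e1) \<longleftrightarrow> odd (Z$1$1)" "odd (int e2) \<longleftrightarrow> odd (Z$2$1 - Z$1$1)"
     "odd (int e3) \<longleftrightarrow> odd (Z$1$2 - Z$1$1)"
    using e by auto
  show ?thesis
  unfolding divm_def forall_2
  using p1 p2 p3 tr o
  apply (simp add: smat_nth Nm_nth)
  by blast
qed
lemma level:
  fixes c1 c2 c3 :: "int^2" and Z :: "int^2^2" and n k :: nat
  defines "G \<equiv> {mpow (transv_mat c1) (2^n), mpow (transv_mat c2) (2^n), mpow (transv_mat c3) (2^n)}"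
  assumes p1: "odd (c1$1)" "odd (c1$2)" and p2: "even (c2$1)" "odd (c2$2)"
    and p3: "odd (c3$1)" "even (c3$2)"
    and nk: "1 \<le> n" "n \<le> k" and tr: "even (Z$1$1 + Z$2$2)"
  shows "\<exists>V \<in> Rg G. divm (2 * 2^k) (V - (mat 1 + smat (2^k) Z))"
proof -
  define q :: int where "q = 2^k"
  have qe: "even q" using nk unfolding q_def by simp
  define e1 :: nat where "e1 = (if even (Z$1$1) then 0 else 1)"
  define e2 :: nat where "e2 = (if even (Z$2$1 - Z$1$1) then 0 else 1)"
  define e3 :: nat where "e3 = (if even (Z$1$2 - Z$1$1) then 0 else 1)"
  have kn: "(2::nat)^k = 2^n * 2^(k-n)" using nk by (simp add: power_add[symmetric])
  have P: "mpow (transv_mat c) (2^k * e) \<in> Rg G" if "mpow (transv_mat c) (2^n) \<in> G" for c e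
  proof -
    have "mpow (transv_mat c) (2^k * e) = mpow (mpow (transv_mat c) (2^n)) (2^(k-n) * e)"
      by (simp add: kn mpow_mult mult.assoc)
    thus ?thesis using Rg_pow[OF that] by simp
  qed
  have Peq: "mpow (transv_mat c) (2^k * e) = mat 1 + smat q (smat (int e) (Nm c))" for c e
    by (simp add: mpow_transv smat_smat q_def)
  define A1 where "A1 = smat (int e1) (Nm c1)"
  define A2 where "A2 = smat (int e2) (Nm c2)"
  define A3 where "A3 = smat (int e3) (Nm c3)"
  define V where "V = mpow (transv_mat c3) (2^k * e3) ** mpow (transv_mat c2) (2^k * e2) ** mpow (transv_mat c1) (2^k * e1)"
  have VR: "V \<in> Rg G" unfolding V_def
    by (intro Rg_mult P) (auto simp: G_def)
  have d0: "divm (2*q) (mpow (transv_mat c) (2^k * e) - (mat 1 + smat q (smat (int e) (Nm c))))" for c e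
    by (simp add: Peq divm_zero)
  have dV: "divm (2*q) (V - (mat 1 + smat q (A3 + A2 + A1)))"
    unfolding V_def A1_def A2_def A3_def
    by (intro prod_level qe d0)
  have par: "divm 2 (A3 + A2 + A1 - Z)"
    unfolding A1_def A2_def A3_def
    by (rule par_test[OF p1 p2 p3 tr e1_def e2_def e3_def])
  have eq2: "mat 1 + smat q (A3 + A2 + A1) - (mat 1 + smat q Z) = smat q (A3 + A2 + A1 - Z)"
    by (rule mat_eqI) (simp_all add: smat_nth algebra_simps)
  have "divm (2*q) (mat 1 + smat q (A3 + A2 + A1) - (mat 1 + smat q Z))"
    unfolding eq2 using divm_smat[OF par, of q] by (simp add: mult.commute)
  hence "divm (2*q) ((V - (mat 1 + smat q (A3 + A2 + A1))) + (mat 1 + smat q (A3 + A2 + A1) - (mat 1 + smat q Z)))"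
    using dV by (intro divm_add)
  hence "divm (2*q) (V - (mat 1 + smat q Z))" by (simp only: diff_add_diff3)
  thus ?thesis using VR unfolding q_def by blast
qed


lemma Rg_det: "W \<in> Rg G \<Longrightarrow> (\<forall>g\<in>G. det2 g = 1) \<Longrightarrow> det2 W = 1"
  by (induction rule: Rg.induct) (auto simp: det2_mult det2_mat1)

lemma mat_diff_ldistrib: "(A::int^2^2) ** ((B::int^2^2) - (C::int^2^2)) = A ** B - A ** C"
  by (rule mat_eqI) (simp_all add: mm_nth algebra_simps)

lemma divm_split: "divm q (Y - M) \<Longrightarrow> Y = M + smat q (\<chi> i j. (Y - M)$i$j div q)"
  by (auto simp: divm_def vec_eq_iff smat_nth dvd_mult_div_cancel)

lemma main_ind:
  fixes c1 c2 c3 :: "int^2" and n k :: nat and X :: "int^2^2"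
  defines "G \<equiv> {mpow (transv_mat c1) (2^n), mpow (transv_mat c2) (2^n), mpow (transv_mat c3) (2^n)}"
  assumes p1: "odd (c1$1)" "odd (c1$2)" and p2: "even (c2$1)" "odd (c2$2)"
    and p3: "odd (c3$1)" "even (c3$2)" and n1: "1 \<le> n"
  shows "n \<le> k \<Longrightarrow> matmod n X = matmod n (mat 1) \<Longrightarrow> det2 X mod 2^k = 1 mod 2^k
     \<Longrightarrow> \<exists>W\<in>Rg G. matmod k W = matmod k X"
proof (induction k arbitrary: X)
  case 0 then show ?case using n1 by simp
next
  case (Suc k)
  show ?case
  proof (cases "Suc k = n")
    case True
    have "mat 1 \<in> Rg G" by (rule Rg.Rg_one)
    moreover have "matmod (Suc k) (mat 1) = matmod (Suc k) X" using True Suc.prems(2) by simp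
    ultimately show ?thesis by blast
  next
    case False
    hence nk: "n \<le> k" using Suc.prems(1) by simp
    have dv: "(2::int)^k dvd 2^Suc k" by simp
    have dk: "det2 X mod 2^k = 1 mod 2^k"
    proof -
      have "det2 X mod 2^k = (det2 X mod 2^Suc k) mod 2^k" by (rule mod_mod_cancel[OF dv, symmetric])
      also have "\<dots> = (1 mod 2^Suc k) mod 2^k" using Suc.prems(3) by simp
      also have "\<dots> = 1 mod 2^k" by (rule mod_mod_cancel[OF dv])
      finally show ?thesis .
    qed
    obtain W where W: "W \<in> Rg G" "matmod k W = matmod k X"
      using Suc.IH[OF nk Suc.prems(2) dk] by blast
    have "\<forall>g\<in>G. det2 g = 1" by (auto simp: G_def det2_mpow det2_transv)
    hence detW: "det2 W = 1" using Rg_det W(1) by blast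
    define W' where "W' = adj W"
    have W'W: "W' ** W = mat 1" and WW': "W ** W' = mat 1"
      using adj_mult[of W] detW by (simp_all add: W'_def)
    define q :: int where "q = 2^k"
    have q0: "q \<noteq> 0" by (simp add: q_def)
    have qe: "even q" using nk n1 by (simp add: q_def)
    define Y where "Y = W' ** X"
    have "divm q (W - X)" using W(2) by (simp add: matmod_eq_iff q_def)
    hence "divm q (W' ** (X - W))" by (intro divm_mult_left) (rule divm_swap)
    moreover have "W' ** (X - W) = Y - mat 1" by (simp add: mat_diff_ldistrib Y_def W'W)
    ultimately have dY: "divm q (Y - mat 1)" by simp
    define Z where "Z = (\<chi> i j. (Y - mat 1)$i$j div q)"
    have YZ: "Y = mat 1 + smat q Z" unfolding Z_def by (rule divm_split[OF dY])
    have detY: "det2 Y = det2 X" by (simp add: Y_def W'_def det2_mult det2_adj detW)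
    have detZ: "det2 (mat 1 + smat q Z) = 1 + (q * (Z$1$1 + Z$2$2) + q*q*det2 Z)"
      by (simp add: det2_def smat_nth mat_def algebra_simps)
    have "det2 X mod (2*q) = 1 mod (2*q)" using Suc.prems(3) by (simp add: q_def)
    hence "2*q dvd det2 X - 1" by (simp add: mod_eq_dvd_iff)
    have "det2 X = det2 (mat 1 + smat q Z)" using detY YZ by simp
    hence e: "det2 X - 1 = q * (Z$1$1 + Z$2$2) + q*q*det2 Z" using detZ by simp
    have a: "2*q dvd q * (Z$1$1 + Z$2$2) + q*q*det2 Z"
      using \<open>2*q dvd det2 X - 1\<close> by (simp only: e)
    obtain r where r: "q = 2*r" using qe by blast
    have b: "2*q dvd q*q*det2 Z" unfolding r by (simp add: mult.assoc)
    have "2*q dvd q * (Z$1$1 + Z$2$2)" using dvd_diff[OF a b] by simp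
    hence "q * 2 dvd q * (Z$1$1 + Z$2$2)" by (simp add: mult.commute)
    hence tr: "even (Z$1$1 + Z$2$2)" using q0 by simp
    obtain V where V: "V \<in> Rg G" "divm (2 * 2^k) (V - (mat 1 + smat (2^k) Z))"
      using level[OF p1 p2 p3 n1 nk tr] unfolding G_def by blast
    have WV: "W ** V \<in> Rg G" using Rg_mult[OF V(1) W(1)] .
    have WY: "W ** Y = X" by (simp add: Y_def matrix_mul_assoc WW')
    have "divm (2 * 2^k) (W ** (V - Y))"
      using V(2) YZ q_def by (intro divm_mult_left) simp
    hence "divm (2^Suc k) (W ** V - X)" by (simp add: mat_diff_ldistrib WY)
    hence "matmod (Suc k) (W ** V) = matmod (Suc k) X" by (simp add: matmod_eq_iff)
    thus ?thesis using WV by blast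
  qed
qed

theorem proposition3p3:
  fixes c1 c2 c3 :: "int ^ 2" and n :: nat
  assumes "\<forall>i. 2 dvd (c1 - (a1 + b1)) $ i"
    and "\<forall>i. 2 dvd (c2 - b1) $ i"
    and "\<forall>i. 2 dvd (c3 - a1) $ i"
    and "n \<ge> 1"
  shows "topgen {embed (transv_mat c1) [^]\<^bsub>Sp2\<^esub> (2 ^ n :: nat),
                 embed (transv_mat c2) [^]\<^bsub>Sp2\<^esub> (2 ^ n :: nat),
                 embed (transv_mat c3) [^]\<^bsub>Sp2\<^esub> (2 ^ n :: nat)} = Gamma2pow n"
    (is "topgen ?S = _")
proof -
  define G where "G = {mpow (transv_mat c1) (2^n), mpow (transv_mat c2) (2^n), mpow (transv_mat c3) (2^n)}"
  have p1: "odd (c1$1)" "odd (c1$2)"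
    using assms(1)[rule_format, of 1] assms(1)[rule_format, of 2] by (simp_all add: a1_def b1_def axis_def)
  have p2: "even (c2$1)" "odd (c2$2)"
    using assms(2)[rule_format, of 1] assms(2)[rule_format, of 2] by (simp_all add: a1_def b1_def axis_def)
  have p3: "odd (c3$1)" "even (c3$2)"
    using assms(3)[rule_format, of 1] assms(3)[rule_format, of 2] by (simp_all add: a1_def b1_def axis_def)
  show ?thesis
  proof
    show "topgen ?S \<subseteq> Gamma2pow n" unfolding topgen_def
      by (rule Inter_lower) (simp add: Gamma_subgroup Gamma_closed S_Gamma[OF assms(4)])
    show "Gamma2pow n \<subseteq> topgen ?S" unfolding topgen_def
    proof (rule Inter_greatest)
      fix H assume "H \<in> {H. subgroup H Sp2 \<and> closed_Sp H \<and> ?S \<subseteq> H}"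
      hence H: "subgroup H Sp2" "closed_Sp H" "?S \<subseteq> H" by auto
      have RH: "embed W \<in> H" if "W \<in> Rg G" for W
        using that
      proof (induction rule: Rg.induct)
        case Rg_one show ?case using subgroup.one_closed[OF H(1)] embed_one by simp
      next
        case (Rg_step W g)
        have "embed g \<in> ?S" using Rg_step.hyps(2) by (auto simp: G_def embed_pow)
        hence "embed g \<in> H" using H(3) by blast
        hence "embed W \<otimes>\<^bsub>Sp2\<^esub> embed g \<in> H" by (rule subgroup.m_closed[OF H(1) Rg_step.IH])
        thus ?case by (simp add: embed_mult)
      qed
      show "Gamma2pow n \<subseteq> H"
      proof
        fix x assume x: "x \<in> Gamma2pow n"
        hence xc: "x \<in> carrier Sp2" and xn: "x n = matmod n (mat 1)" by (auto simp: Gamma2pow_def)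
        hence cx: "compatible x" "\<forall>k. det2 (x k) mod 2^k = 1 mod 2^k"
          by (auto simp: carrier_Sp2 symplectic_iff)
        have "\<exists>y\<in>H. y k = x k" for k
        proof (cases "k < n")
          case True
          have "x k = matmod k (x n)" using compatible_le[of k n x] True cx(1) by simp
          also have "\<dots> = matmod k (mat 1)" using xn True by (simp add: matmod_matmod)
          finally show ?thesis using subgroup.one_closed[OF H(1)]
            by (intro bexI[of _ "\<one>\<^bsub>Sp2\<^esub>"]) (simp_all add: one_Sp2)
        next
          case False
          hence nk: "n \<le> k" by simp
          have mn: "matmod n (x k) = matmod n (mat 1)" using compatible_le[OF nk cx(1)] xn by simp
          obtain W where W: "W \<in> Rg G" "matmod k W = matmod k (x k)"
            using main_ind[OF p1 p2 p3 assms(4) nk mn cx(2)[rule_format]] unfolding G_def by blast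
          moreover have "matmod k (x k) = x k" using cx(1) by (simp add: compatible_def)
          ultimately show ?thesis using RH
            by (intro bexI[of _ "embed W"]) (simp_all add: embed_def)
        qed
        thus "x \<in> H" using H(2) xc unfolding closed_Sp_def by blast
      qed
    qed
  qed
qed

end
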